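(* Let $Q$ be a quantity space over a field $K$. Then every non-zero $u\in Q$ is a unit quantity (unit element) for its dimension $[u]$.
   Context: A scalable monoid over a (unital, associative) ring $R$ is a monoid $X$ (identity $1_X$, product written $xy$) together with a map $R\times X\to X$, $(\alpha,x)\mapsto\alpha\cdot x$, such that $1\cdot x=x$, $\alpha\cdot(\beta\cdot x)=\alpha\beta\cdot x$ and $\alpha\cdot(xy)=(\alpha\cdot x)y=x(\alpha\cdot y)$. A quantity space over a field $K$ is a commutative scalable monoid $Q$ over $K$ for which there exists a basis, i.e. a finite set $\{e_1,\ldots,e_n\}$ of invertible elements of $Q$ such that every $x\in Q$ has a unique expansion $x=\mu\cdot\prod_{i=1}^n e_i^{k_i}$ with $\mu\in K$ and $k_i\in\mathbb{Z}$. On $Q$, $x\sim y$ iff $\alpha\cdot x=\beta\cdot y$ for some $\alpha,\beta\in K$; the equivalence class $[x]$ is the dimension of $x$. An element $x$ is non-zero if $x\neq0\cdot x$. A unit element for a class $\mathsf{C}$ is some $u\in\mathsf{C}$ such that every $x\in\mathsf{C}$ equals $\lambda\cdot u$ for some $\lambda\in K$, and such that $\lambda\cdot u=\lambda'\cdot u$ implies $\lambda=\lambda'$. *)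

theory Defs
  imports Main
begin

definition scalable_monoid ::
  "('x \<Rightarrow> 'x \<Rightarrow> 'x) \<Rightarrow> 'x \<Rightarrow> ('r::ring_1 \<Rightarrow> 'x \<Rightarrow> 'x) \<Rightarrow> bool" where
  "scalable_monoid mul one smul \<longleftrightarrow>
     (\<forall>x y z. mul (mul x y) z = mul x (mul y z)) \<and>
     (\<forall>x. mul one x = x \<and> mul x one = x) \<and>
     (\<forall>x. smul 1 x = x) \<and>
     (\<forall>a b x. smul a (smul b x) = smul (a * b) x) \<and>
     (\<forall>a x y. smul a (mul x y) = mul (smul a x) y \<and> smul a (mul x y) = mul x (smul a y))"

definition invertible_el :: "('x \<Rightarrow> 'x \<Rightarrow> 'x) \<Rightarrow> 'x \<Rightarrow> 'x \<Rightarrow> bool" where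
  "invertible_el mul one x \<longleftrightarrow> (\<exists>y. mul x y = one \<and> mul y x = one)"

definition inverse_el :: "('x \<Rightarrow> 'x \<Rightarrow> 'x) \<Rightarrow> 'x \<Rightarrow> 'x \<Rightarrow> 'x" where
  "inverse_el mul one x = (THE y. mul x y = one \<and> mul y x = one)"

primrec npow :: "('x \<Rightarrow> 'x \<Rightarrow> 'x) \<Rightarrow> 'x \<Rightarrow> 'x \<Rightarrow> nat \<Rightarrow> 'x" where
  "npow mul one x 0 = one"
| "npow mul one x (Suc n) = mul x (npow mul one x n)"

definition zpow :: "('x \<Rightarrow> 'x \<Rightarrow> 'x) \<Rightarrow> 'x \<Rightarrow> 'x \<Rightarrow> int \<Rightarrow> 'x" where
  "zpow mul one x k =
     (if 0 \<le> k then npow mul one x (nat k)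
      else npow mul one (inverse_el mul one x) (nat (- k)))"

fun prod_pows :: "('x \<Rightarrow> 'x \<Rightarrow> 'x) \<Rightarrow> 'x \<Rightarrow> ('x \<times> int) list \<Rightarrow> 'x" where
  "prod_pows mul one [] = one"
| "prod_pows mul one ((e, k) # rest) = mul (zpow mul one e k) (prod_pows mul one rest)"

definition is_basis ::
  "('x \<Rightarrow> 'x \<Rightarrow> 'x) \<Rightarrow> 'x \<Rightarrow> ('k::field \<Rightarrow> 'x \<Rightarrow> 'x) \<Rightarrow> 'x list \<Rightarrow> bool" where
  "is_basis mul one smul es \<longleftrightarrow>
     distinct es \<and> (\<forall>e\<in>set es. invertible_el mul one e) \<and>
     (\<forall>x. \<exists>!(\<mu>, ks). length ks = length es \<and>
            x = smul \<mu> (prod_pows mul one (zip es ks)))"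

definition quantity_space ::
  "('x \<Rightarrow> 'x \<Rightarrow> 'x) \<Rightarrow> 'x \<Rightarrow> ('k::field \<Rightarrow> 'x \<Rightarrow> 'x) \<Rightarrow> bool" where
  "quantity_space mul one smul \<longleftrightarrow>
     scalable_monoid mul one smul \<and> (\<forall>x y. mul x y = mul y x) \<and>
     (\<exists>es. is_basis mul one smul es)"

definition dim_equiv :: "('k::field \<Rightarrow> 'x \<Rightarrow> 'x) \<Rightarrow> 'x \<Rightarrow> 'x \<Rightarrow> bool" where
  "dim_equiv smul x y \<longleftrightarrow> (\<exists>a b. smul a x = smul b y)"

definition dimension :: "('k::field \<Rightarrow> 'x \<Rightarrow> 'x) \<Rightarrow> 'x \<Rightarrow> 'x set" where
  "dimension smul x = {y. dim_equiv smul x y}"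

definition nonzero_el :: "('k::field \<Rightarrow> 'x \<Rightarrow> 'x) \<Rightarrow> 'x \<Rightarrow> bool" where
  "nonzero_el smul x \<longleftrightarrow> x \<noteq> smul 0 x"

definition unit_element :: "('k::field \<Rightarrow> 'x \<Rightarrow> 'x) \<Rightarrow> 'x set \<Rightarrow> 'x \<Rightarrow> bool" where
  "unit_element smul C u \<longleftrightarrow> u \<in> C \<and> (\<forall>x\<in>C. \<exists>c. x = smul c u) \<and>
     (\<forall>c c'. smul c u = smul c' u \<longrightarrow> c = c')"

end

theory Submission
  imports Defs
begin

lemma basis_uniq:
  assumes "is_basis mul one smul es"
    and "length ks = length es" and "length ks' = length es"
    and "smul m (prod_pows mul one (zip es ks)) = smul m' (prod_pows mul one (zip es ks'))"
  shows "m = m' \<and> ks = ks'"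
proof -
  let ?x = "smul m (prod_pows mul one (zip es ks))"
  have "\<exists>!(\<mu>, ks). length ks = length es \<and> ?x = smul \<mu> (prod_pows mul one (zip es ks))"
    using assms(1) unfolding is_basis_def by blast
  then obtain p where "\<forall>q. (case q of (\<mu>, ks) \<Rightarrow> length ks = length es \<and> ?x = smul \<mu> (prod_pows mul one (zip es ks))) \<longrightarrow> q = p"
    unfolding Ex1_def by blast
  then have "(m, ks) = p" "(m', ks') = p" using assms(2-4) by auto
  then have "(m, ks) = (m', ks')" by simp
  then show ?thesis by simp
qed

lemma basis_ex:
  assumes "is_basis mul one smul es"
  obtains m ks where "length ks = length es" "x = smul m (prod_pows mul one (zip es ks))"
proof -
  have "\<exists>!(\<mu>, ks). length ks = length es \<and> x = smul \<mu> (prod_pows mul one (zip es ks))"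
    using assms(1) unfolding is_basis_def by blast
  then show ?thesis using that by (auto simp: Ex1_def split: prod.splits)
qed

theorem proposition3p7:
  fixes mul :: "'q \<Rightarrow> 'q \<Rightarrow> 'q" and one :: 'q and smul :: "'k::field \<Rightarrow> 'q \<Rightarrow> 'q"
  assumes "quantity_space mul one smul"
    and "nonzero_el smul u"
  shows "unit_element smul (dimension smul u) u"
proof -
  have sm: "\<And>a b x. smul a (smul b x) = smul (a * b) x" and s1: "\<And>x. smul 1 x = x"
    using assms(1) unfolding quantity_space_def scalable_monoid_def by auto
  obtain es where B: "is_basis mul one smul es"
    using assms(1) unfolding quantity_space_def by auto
  let ?P = "\<lambda>ks. prod_pows mul one (zip es ks)"
  obtain \<mu> ks where L: "length ks = length es" and U: "u = smul \<mu> (?P ks)"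
    using basis_ex[OF B] by metis
  have mu: "\<mu> \<noteq> 0"
  proof
    assume "\<mu> = 0"
    then have "smul 0 u = u" using U sm by simp
    then show False using assms(2) unfolding nonzero_el_def by simp
  qed
  have "u \<in> dimension smul u" unfolding dimension_def dim_equiv_def by auto
  moreover have "\<exists>c. x = smul c u" if xd: "x \<in> dimension smul u" for x
  proof -
    obtain a b where ab: "smul a u = smul b x"
      using xd unfolding dimension_def dim_equiv_def mem_Collect_eq by blast
    obtain \<nu> ks' where L': "length ks' = length es" and X: "x = smul \<nu> (?P ks')"
      using basis_ex[OF B] by metis
    have "smul (a * \<mu>) (?P ks) = smul (b * \<nu>) (?P ks')"
      using ab U X sm by simp
    then have "ks = ks'" using basis_uniq[OF B L L'] by blast
    then have "x = smul (\<nu> / \<mu>) u" using X U sm mu by simp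
    then show ?thesis by blast
  qed
  moreover have "c = c'" if "smul c u = smul c' u" for c c'
  proof -
    have "smul (c * \<mu>) (?P ks) = smul (c' * \<mu>) (?P ks)" using that U sm by simp
    then have "c * \<mu> = c' * \<mu>" using basis_uniq[OF B L L] by blast
    then show ?thesis using mu by simp
  qed
  ultimately show ?thesis unfolding unit_element_def by blast
qed

end
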